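(* Let $\mathcal M(n)$ denote the maximum number of edges of an edge-magic graph with $n$ vertices. Then $$\frac27\, n^2+O(n)\le \mathcal M(n)\le \left(0.489\ldots+o(1)\right) n^2 \qquad (n\to\infty),$$ where $0.489\ldots$ denotes the constant $\frac12-\frac{2}{(2+(1+2\sqrt2)\pi)^2}\approx 0.4898$.
   Context: For a positive integer $k$, $[k]=\{1,\dots,k\}$. Let $G$ be a finite simple graph with $n$ vertices and $m$ edges (with $V(G)\cap E(G)=\emptyset$). An edge-magic labelling of $G$ with magic sum $s$ is a bijection $l:V(G)\cup E(G)\to[m+n]$ such that $l(a)+l(b)+l(ab)=s$ for every edge $ab$ of $G$. The graph $G$ is edge-magic if it admits an edge-magic labelling for some $s$. *)

theory Defs
  imports Complex_Main
begin

text \<open>A finite simple graph is a finite vertex set V with a set E of 2-element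
subsets of V. Vertices and edges are kept disjoint by tagging them with Inl / Inr.\<close>

definition simple_graph :: "'a set \<Rightarrow> 'a set set \<Rightarrow> bool" where
  "simple_graph V E \<longleftrightarrow> finite V \<and> E \<subseteq> {{a, b} | a b. a \<in> V \<and> b \<in> V \<and> a \<noteq> b}"

definition edge_magic_labelling ::
    "'a set \<Rightarrow> 'a set set \<Rightarrow> ('a + 'a set \<Rightarrow> nat) \<Rightarrow> nat \<Rightarrow> bool" where
  "edge_magic_labelling V E l s \<longleftrightarrow>
     bij_betw l (Inl ` V \<union> Inr ` E) {1 .. card E + card V} \<and>
     (\<forall>a b. {a, b} \<in> E \<longrightarrow> l (Inl a) + l (Inl b) + l (Inr {a, b}) = s)"

definition edge_magic :: "'a set \<Rightarrow> 'a set set \<Rightarrow> bool" where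
  "edge_magic V E \<longleftrightarrow> simple_graph V E \<and> (\<exists>l s. edge_magic_labelling V E l s)"

text \<open>Maximum number of edges of an edge-magic graph on n vertices
(vertex set taken to be {0..<n}; every n-vertex graph is isomorphic to one of these).\<close>

definition max_edge_magic :: "nat \<Rightarrow> nat" where
  "max_edge_magic n = Max {card E | E. edge_magic {..<n} E}"

end

theory Submission
  imports Defs "HOL-Analysis.Convex" "HOL-Analysis.Complex_Transcendental"
begin


lemma norm_cis_minus_one_le: "cmod (cis a - 1) \<le> \<bar>a\<bar>"
proof -
  have "(cmod (cis a - 1))^2 = (cos a - 1)^2 + (sin a)^2"
    by (simp add: cmod_power2)
  also have "\<dots> = 2 - 2 * cos a"
    by (simp add: power2_eq_square algebra_simps)
  also have "cos a = cos (2 * (a/2))" by simp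
  also have "\<dots> = 1 - 2 * (sin (a/2))^2" by (rule cos_double_sin)
  finally have eq: "(cmod (cis a - 1))^2 = 4 * (sin (a/2))^2" by simp
  have "\<bar>sin (a/2)\<bar> \<le> \<bar>a/2\<bar>" by (rule abs_sin_x_le_abs_x)
  then have "(sin (a/2))^2 \<le> (a/2)^2"
    by (metis abs_le_square_iff)
  then have "(cmod (cis a - 1))^2 \<le> a^2" using eq by (simp add: power_divide)
  then show ?thesis
    by (metis abs_le_square_iff abs_norm_cancel)
qed

lemma geo_sum: "((z::complex) - 1) * (\<Sum>k\<in>{1..N}. z^k) = z^(Suc N) - z"
proof (induction N)
  case 0 then show ?case by simp
next
  case (Suc N)
  have "(z - 1) * (\<Sum>k\<in>{1..Suc N}. z^k) = (z - 1) * (\<Sum>k\<in>{1..N}. z^k) + (z - 1) * z^(Suc N)"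
    by (simp add: sum.cl_ivl_Suc distrib_left)
  also have "\<dots> = z^(Suc (Suc N)) - z" using Suc by (simp add: algebra_simps)
  finally show ?case .
qed

lemma cis_sum_as_pow: "(\<Sum>k\<in>{1..N}. cis (- real k * t)) = (\<Sum>k\<in>{1..N}. (cis (-t))^k)"
proof (rule sum.cong[OF refl])
  fix k :: nat
  have "cis (-t) ^ k = cis (real k * (-t))" by (rule Complex.DeMoivre)
  also have "real k * (-t) = - real k * t" by simp
  finally show "cis (- real k * t) = cis (-t) ^ k" by simp
qed

lemma G2_zero:
  assumes "N \<ge> 2"
  shows "(\<Sum>k\<in>{1..N}. cis (- real k * (2*pi/N))) = 0"
proof -
  let ?z = "cis (-(2*pi/N))"
  have "?z ^ N = cis (real N * (-(2*pi/N)))" by (rule Complex.DeMoivre)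
  also have "real N * (-(2*pi/N)) = -(2*pi)" using assms by simp
  finally have zN: "?z ^ N = 1" by (simp add: cis_cnj[symmetric])
  have pos: "0 < 2*pi/N" using assms by simp
  have le: "2*pi/N \<le> pi" using assms by (simp add: field_simps)
  have "cos (2*pi/N) \<noteq> 1"
  proof
    assume "cos (2*pi/N) = 1"
    then have "sin (2*pi/N) = 0" using sin_cos_squared_add[of "2*pi/N"] by simp
    moreover have "sin (2*pi/N) > 0 \<or> 2*pi/N = pi" using sin_gt_zero[OF pos] le by (cases "2*pi/N < pi") auto
    ultimately have "2*pi/N = pi" by auto
    then have "cos (2*pi/N) = -1" by simp
    with \<open>cos (2*pi/N) = 1\<close> show False by simp
  qed
  then have z1: "?z \<noteq> 1" by (auto simp: complex_eq_iff)
  have "(?z - 1) * (\<Sum>k\<in>{1..N}. ?z^k) = ?z^(Suc N) - ?z" by (rule geo_sum)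
  also have "\<dots> = 0" using zN by simp
  finally have "(\<Sum>k\<in>{1..N}. ?z^k) = 0" using z1 by simp
  then show ?thesis by (simp only: cis_sum_as_pow)
qed

lemma G1_large:
  assumes "N \<ge> 1"
  shows "cmod (\<Sum>k\<in>{1..N}. cis (- real k * (pi/N))) \<ge> 2 * N / pi"
proof -
  let ?z = "cis (-(pi/N))"
  let ?S = "\<Sum>k\<in>{1..N}. ?z^k"
  have "?z ^ N = cis (real N * (-(pi/N)))" by (rule Complex.DeMoivre)
  also have "real N * (-(pi/N)) = -pi" using assms by simp
  finally have zN: "?z ^ N = -1" by (simp add: complex_eq_iff)
  have "(?z - 1) * ?S = ?z^(Suc N) - ?z" by (rule geo_sum)
  also have "\<dots> = -2 * ?z" using zN by simp
  finally have eq: "(?z - 1) * ?S = -2 * ?z" .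
  then have "cmod (?z - 1) * cmod ?S = 2" by (metis norm_mult norm_cis norm_minus_cancel mult.right_neutral norm_numeral mult_minus_left)
  moreover have "cmod (?z - 1) \<le> pi / N" using norm_cis_minus_one_le[of "-(pi/N)"] by simp
  moreover have "pi / N > 0" using assms by simp
  ultimately have "2 \<le> (pi/N) * cmod ?S"
    by (metis mult_right_mono norm_ge_zero)
  then have "2 * N / pi \<le> cmod ?S" using assms by (simp add: field_simps)
  then show ?thesis by (simp only: cis_sum_as_pow)
qed

lemma jensen_cis:
  fixes x :: "'a \<Rightarrow> real"
  assumes fin: "finite V"
  shows "2 * (cmod (\<Sum>v\<in>V. cis (x v)))^2 - (real (card V))^2
           \<le> real (card V) * cmod (\<Sum>v\<in>V. cis (2 * x v))"
proof (cases "(\<Sum>v\<in>V. cis (x v)) = 0")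
  case True
  have "0 \<le> real (card V) * cmod (\<Sum>v\<in>V. cis (2 * x v))" by simp
  moreover have "2 * (cmod (\<Sum>v\<in>V. cis (x v)))^2 - (real (card V))^2 \<le> 0" using True by simp
  ultimately show ?thesis by linarith
next
  case False
  define S where "S = (\<Sum>v\<in>V. cis (x v))"
  define S2 where "S2 = (\<Sum>v\<in>V. cis (2 * x v))"
  define \<psi> where "\<psi> = Arg S"
  have S_eq: "S = complex_of_real (cmod S) * cis \<psi>"
    using rcis_cmod_Arg[of S] by (simp add: rcis_def \<psi>_def)
  have "cis (-\<psi>) * S = complex_of_real (cmod S)"
    by (subst S_eq) (simp add: cis_mult mult.left_commute)
  moreover have "cis (-\<psi>) * S = (\<Sum>v\<in>V. cis (x v - \<psi>))"
    by (simp add: S_def sum_distrib_left cis_mult algebra_simps)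
  ultimately have "(\<Sum>v\<in>V. cis (x v - \<psi>)) = complex_of_real (cmod S)" by simp
  then have sum1: "(\<Sum>v\<in>V. cos (x v - \<psi>)) = cmod S"
    by (metis (no_types, lifting) Re_complex_of_real Re_sum cis.sel(1) sum.cong)
  have "cis (-(2*\<psi>)) * S2 = (\<Sum>v\<in>V. cis (2 * (x v - \<psi>)))"
    by (simp add: S2_def sum_distrib_left cis_mult algebra_simps)
  then have "(\<Sum>v\<in>V. cos (2 * (x v - \<psi>))) = Re (cis (-(2*\<psi>)) * S2)"
    by (simp add: Re_sum)
  also have "\<dots> \<le> cmod (cis (-(2*\<psi>)) * S2)" by (rule complex_Re_le_cmod)
  also have "\<dots> = cmod S2" by (simp add: norm_mult)
  finally have sum2: "(\<Sum>v\<in>V. cos (2 * (x v - \<psi>))) \<le> cmod S2" .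
  have "(\<Sum>v\<in>V. cos (2 * (x v - \<psi>))) = (\<Sum>v\<in>V. 2 * (cos (x v - \<psi>))^2 - 1)"
    by (simp only: cos_double_cos)
  also have "\<dots> = 2 * (\<Sum>v\<in>V. (cos (x v - \<psi>))^2) - real (card V)"
    by (simp add: sum_subtractf sum_distrib_left)
  finally have sum3: "2 * (\<Sum>v\<in>V. (cos (x v - \<psi>))^2) - real (card V) \<le> cmod S2"
    using sum2 by simp
  have cs: "(\<Sum>v\<in>V. cos (x v - \<psi>))^2 \<le> (\<Sum>v\<in>V. (cos (x v - \<psi>))^2) * real (card V)"
    by (rule sum_squared_le_sum_of_squares)
  have "2 * (cmod S)^2 \<le> 2 * ((\<Sum>v\<in>V. (cos (x v - \<psi>))^2) * real (card V))"
    using cs sum1 by simp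
  also have "\<dots> = (2 * (\<Sum>v\<in>V. (cos (x v - \<psi>))^2)) * real (card V)" by simp
  also have "\<dots> \<le> (cmod S2 + real (card V)) * real (card V)"
    by (intro mult_right_mono) (use sum3 in linarith, simp)
  finally show ?thesis unfolding S_def S2_def by (simp add: algebra_simps power2_eq_square)
qed

lemma simple_graph_finite_E:
  assumes "simple_graph V E" shows "finite E"
proof -
  have "E \<subseteq> Pow V" using assms unfolding simple_graph_def by auto
  moreover have "finite (Pow V)" using assms unfolding simple_graph_def by simp
  ultimately show ?thesis by (rule finite_subset)
qed

lemma sg_edge:
  assumes "simple_graph V E" "e \<in> E"
  shows "\<exists>a b. e = {a,b} \<and> a \<in> V \<and> b \<in> V \<and> a \<noteq> b"
  using assms unfolding simple_graph_def by (simp add: subset_eq)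

definition Ed :: "'a set set \<Rightarrow> ('a \<times> 'a) set" where
  "Ed E = {p. {fst p, snd p} \<in> E}"

lemma Ed_subset: assumes "simple_graph V E" shows "Ed E \<subseteq> V \<times> V"
proof
  fix p assume "p \<in> Ed E"
  then have "{fst p, snd p} \<in> E" by (simp add: Ed_def)
  then obtain a b where "{fst p, snd p} = {a,b}" "a \<in> V" "b \<in> V"
    using sg_edge[OF assms] by blast
  then have "fst p \<in> {a,b}" "snd p \<in> {a,b}" by (metis insertI1, metis insert_commute insertI1)
  then show "p \<in> V \<times> V" using \<open>a \<in> V\<close> \<open>b \<in> V\<close> by (cases p) auto
qed

lemma sum_Ed:
  fixes h :: "'a set \<Rightarrow> complex"
  assumes sg: "simple_graph V E"
  shows "(\<Sum>p\<in>Ed E. h {fst p, snd p}) = 2 * (\<Sum>e\<in>E. h e)"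
proof -
  have finV: "finite V" using sg by (simp add: simple_graph_def)
  have finEd: "finite (Ed E)" using Ed_subset[OF sg] finV by (meson finite_SigmaI finite_subset)
  have finE: "finite E" by (rule simple_graph_finite_E[OF sg])
  have img: "(\<lambda>p. {fst p, snd p}) ` Ed E \<subseteq> E" by (auto simp: Ed_def)
  have "(\<Sum>p\<in>Ed E. h {fst p, snd p}) = (\<Sum>e\<in>E. \<Sum>p\<in>{p \<in> Ed E. {fst p, snd p} = e}. h {fst p, snd p})"
    by (rule sum.group[OF finEd finE img, symmetric])
  also have "\<dots> = (\<Sum>e\<in>E. 2 * h e)"
  proof (rule sum.cong[OF refl])
    fix e assume "e \<in> E"
    then obtain a b where eab: "e = {a,b}" "a \<noteq> b" using sg_edge[OF sg, of e] by blast
    have eE: "{a,b} \<in> E" "{b,a} \<in> E" using \<open>e \<in> E\<close> eab(1) by (simp_all add: insert_commute)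
    have set_eq: "{p \<in> Ed E. {fst p, snd p} = {a,b}} = {(a,b),(b,a)}"
    proof (intro equalityI subsetI)
      fix p assume "p \<in> {p \<in> Ed E. {fst p, snd p} = {a,b}}"
      then have "{fst p, snd p} = {a,b}" by simp
      then have "(fst p = a \<and> snd p = b) \<or> (fst p = b \<and> snd p = a)"
        by (simp add: doubleton_eq_iff)
      then show "p \<in> {(a,b),(b,a)}" by (cases p) auto
    next
      fix p assume "p \<in> {(a,b),(b,a)}"
      then have "p = (a,b) \<or> p = (b,a)" by simp
      then show "p \<in> {p \<in> Ed E. {fst p, snd p} = {a,b}}"
      proof
        assume "p = (a,b)" then show ?thesis using eE by (simp add: Ed_def)
      next
        assume "p = (b,a)" then show ?thesis using eE by (simp add: Ed_def insert_commute)
      qed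
    qed
    have "(\<Sum>p\<in>{p \<in> Ed E. {fst p, snd p} = {a,b}}. h {fst p, snd p}) = h {a,b} + h {b,a}"
      unfolding set_eq using eab(2) by simp
    also have "\<dots> = 2 * h {a,b}" by (simp add: insert_commute)
    finally show "(\<Sum>p\<in>{p \<in> Ed E. {fst p, snd p} = e}. h {fst p, snd p}) = 2 * h e"
      unfolding eab(1) .
  qed
  also have "\<dots> = 2 * (\<Sum>e\<in>E. h e)" by (simp add: sum_distrib_left)
  finally show ?thesis .
qed

lemma card_Ed:
  assumes sg: "simple_graph V E"
  shows "card (Ed E) = 2 * card E"
proof -
  have "(\<Sum>p\<in>Ed E. (\<lambda>_. 1::complex) {fst p, snd p}) = 2 * (\<Sum>e\<in>E. (\<lambda>_. 1) e)"
    by (rule sum_Ed[OF sg])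
  then have "(of_nat (card (Ed E)) :: complex) = of_nat (2 * card E)" by simp
  then show ?thesis by (simp only: of_nat_eq_iff)
qed

lemma upper_key:
  assumes em: "edge_magic {..<n} E" and n2: "n \<ge> 2"
  shows "\<exists>a b::real. a \<ge> 0 \<and> b \<ge> 0 \<and> b^2 \<le> 2*b + (real n^2 - 2*real (card E))
     \<and> a^2 \<ge> 2*(2*(real (card E) + real n)/pi - real n) - (real n^2 - 2*real (card E))
     \<and> 2*a^2 - (real n)^2 \<le> real n * b"
proof -
  define V where "V = {..<n}"
  obtain l s where lab: "edge_magic_labelling V E l s" and sg: "simple_graph V E"
    using em unfolding edge_magic_def V_def by blast
  define m where "m = card E"
  define N where "N = m + n"
  define f where "f v = real (l (Inl v))" for v
  define g where "g e = real (l (Inr e))" for e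
  define F where "F \<theta> = (\<Sum>v\<in>V. cis (f v * \<theta>))" for \<theta>
  define M where "M = real n^2 - 2 * real m"
  have finV: "finite V" and cardV: "card V = n" by (simp_all add: V_def)
  have finE: "finite E" by (rule simple_graph_finite_E[OF sg])
  have bij: "bij_betw l (Inl ` V \<union> Inr ` E) {1..N}"
    using lab cardV unfolding edge_magic_labelling_def N_def m_def by simp
  have magic: "\<And>a b. {a,b} \<in> E \<Longrightarrow> l (Inl a) + l (Inl b) + l (Inr {a,b}) = s"
    using lab unfolding edge_magic_labelling_def by blast
  have EdVV: "Ed E \<subseteq> V \<times> V" by (rule Ed_subset[OF sg])
  have finVV: "finite (V \<times> V)" using finV by simp
  have cardEd: "card (Ed E) = 2 * m" unfolding m_def by (rule card_Ed[OF sg])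
  have step1: "cmod (F \<theta> ^ 2 - 2 * (\<Sum>e\<in>E. cis ((real s - g e) * \<theta>))) \<le> M" for \<theta>
  proof -
    let ?c = "\<lambda>p. cis ((f (fst p) + f (snd p)) * \<theta>)"
    have sq: "F \<theta> ^ 2 = (\<Sum>p\<in>V \<times> V. ?c p)"
      unfolding F_def power2_eq_square sum_product sum.cartesian_product
      by (rule sum.cong) (auto simp: cis_mult algebra_simps)
    have ed: "(\<Sum>p\<in>Ed E. ?c p) = 2 * (\<Sum>e\<in>E. cis ((real s - g e) * \<theta>))"
    proof -
      have "(\<Sum>p\<in>Ed E. ?c p) = (\<Sum>p\<in>Ed E. (\<lambda>e. cis ((real s - g e) * \<theta>)) {fst p, snd p})"
      proof (rule sum.cong[OF refl])
        fix p assume "p \<in> Ed E"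
        then have "{fst p, snd p} \<in> E" by (simp add: Ed_def)
        then have "l (Inl (fst p)) + l (Inl (snd p)) + l (Inr {fst p, snd p}) = s" by (rule magic)
        then have "f (fst p) + f (snd p) = real s - g {fst p, snd p}"
          unfolding f_def g_def by (metis add_diff_cancel_right' of_nat_add)
        then show "?c p = (\<lambda>e. cis ((real s - g e) * \<theta>)) {fst p, snd p}" by simp
      qed
      also have "\<dots> = 2 * (\<Sum>e\<in>E. cis ((real s - g e) * \<theta>))" by (rule sum_Ed[OF sg])
      finally show ?thesis .
    qed
    have split: "(\<Sum>p\<in>V \<times> V. ?c p) = (\<Sum>p\<in>V \<times> V - Ed E. ?c p) + (\<Sum>p\<in>Ed E. ?c p)"
      by (rule sum.subset_diff[OF EdVV finVV])
    have "F \<theta> ^ 2 - 2 * (\<Sum>e\<in>E. cis ((real s - g e) * \<theta>)) = (\<Sum>p\<in>V \<times> V - Ed E. ?c p)"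
      using sq ed split by simp
    also have "cmod \<dots> \<le> real (card (V \<times> V - Ed E)) * 1"
      by (rule sum_norm_bound) simp
    also have "card (V \<times> V - Ed E) = n * n - 2 * m"
      using card_Diff_subset[OF finite_subset[OF EdVV finVV] EdVV] cardEd cardV
      by (simp add: card_cartesian_product)
    also have "real (n * n - 2 * m) = M"
    proof -
      have "2 * m \<le> n * n" using card_mono[OF finVV EdVV] cardEd cardV by (simp add: card_cartesian_product)
      then show ?thesis unfolding M_def by (simp add: of_nat_diff power2_eq_square)
    qed
    finally show ?thesis by simp
  qed
  have step2: "(\<Sum>k\<in>{1..N}. cis (- real k * \<theta>)) = cnj (F \<theta>) + (\<Sum>e\<in>E. cis (- g e * \<theta>))" for \<theta>
  proof -
    have "(\<Sum>k\<in>{1..N}. cis (- real k * \<theta>)) = (\<Sum>x\<in>Inl ` V \<union> Inr ` E. cis (- real (l x) * \<theta>))"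
      by (rule sum.reindex_bij_betw[OF bij, symmetric])
    also have "\<dots> = (\<Sum>x\<in>Inl ` V. cis (- real (l x) * \<theta>)) + (\<Sum>x\<in>Inr ` E. cis (- real (l x) * \<theta>))"
      by (rule sum.union_disjoint) (use finV finE in auto)
    also have "(\<Sum>x\<in>Inl ` V. cis (- real (l x) * \<theta>)) = (\<Sum>v\<in>V. cis (- f v * \<theta>))"
      by (subst sum.reindex) (auto simp: f_def)
    also have "\<dots> = cnj (F \<theta>)" unfolding F_def by (simp add: cis_cnj)
    also have "(\<Sum>x\<in>Inr ` E. cis (- real (l x) * \<theta>)) = (\<Sum>e\<in>E. cis (- g e * \<theta>))"
      by (subst sum.reindex) (auto simp: g_def)
    finally show ?thesis .
  qed
  have step3: "cmod (\<Sum>e\<in>E. cis ((real s - g e) * \<theta>)) = cmod (\<Sum>e\<in>E. cis (- g e * \<theta>))" for \<theta>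
  proof -
    have "(\<Sum>e\<in>E. cis ((real s - g e) * \<theta>)) = cis (real s * \<theta>) * (\<Sum>e\<in>E. cis (- g e * \<theta>))"
      by (simp add: sum_distrib_left cis_mult algebra_simps)
    then show ?thesis by (simp add: norm_mult)
  qed
  have normF: "cmod (F \<theta>) \<le> real n" for \<theta>
  proof -
    have "cmod (F \<theta>) \<le> real (card V) * 1" unfolding F_def by (rule sum_norm_bound) simp
    then show ?thesis using cardV by simp
  qed
  have N2: "N \<ge> 2" using n2 by (simp add: N_def)
  define a where "a = cmod (F (pi / real N))"
  define b where "b = cmod (F (2 * pi / real N))"
  have hb: "b^2 \<le> 2*b + M"
  proof -
    let ?\<theta> = "2 * pi / real N"
    let ?X = "\<Sum>e\<in>E. cis ((real s - g e) * ?\<theta>)"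
    have "(\<Sum>k\<in>{1..N}. cis (- real k * ?\<theta>)) = 0" using G2_zero[OF N2] by simp
    then have "(\<Sum>e\<in>E. cis (- g e * ?\<theta>)) = - cnj (F ?\<theta>)" using step2[of ?\<theta>] by (simp add: eq_neg_iff_add_eq_0 add.commute)
    then have nX: "cmod ?X = b" using step3[of ?\<theta>] by (simp add: b_def)
    have "b^2 = cmod (F ?\<theta> ^ 2)" by (simp add: b_def norm_power)
    also have "\<dots> \<le> cmod (F ?\<theta> ^ 2 - 2 * ?X) + cmod (2 * ?X)"
      using norm_triangle_sub[of "F ?\<theta> ^ 2" "2 * ?X"] by (simp add: add.commute)
    also have "\<dots> \<le> M + 2 * b" using step1[of ?\<theta>] nX by (simp add: norm_mult)
    finally show ?thesis by simp
  qed
  have ha: "a^2 \<ge> 2*(2*real N/pi - real n) - M"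
  proof -
    let ?\<theta> = "pi / real N"
    let ?X = "\<Sum>e\<in>E. cis ((real s - g e) * ?\<theta>)"
    let ?G = "\<Sum>k\<in>{1..N}. cis (- real k * ?\<theta>)"
    have G: "cmod ?G \<ge> 2 * real N / pi" using G1_large[of N] N2 by simp
    have "(\<Sum>e\<in>E. cis (- g e * ?\<theta>)) = ?G - cnj (F ?\<theta>)" using step2[of ?\<theta>] by simp
    then have "cmod ?X = cmod (?G - cnj (F ?\<theta>))" using step3[of ?\<theta>] by simp
    also have "\<dots> \<ge> cmod ?G - cmod (cnj (F ?\<theta>))" by (rule norm_triangle_ineq2)
    finally have "cmod ?X \<ge> 2 * real N / pi - real n" using G normF[of ?\<theta>] by simp
    moreover have "cmod (2 * ?X) \<le> cmod (2 * ?X - F ?\<theta> ^ 2) + cmod (F ?\<theta> ^ 2)"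
      using norm_triangle_sub[of "2 * ?X" "F ?\<theta> ^ 2"] by (simp add: add.commute)
    moreover have "cmod (2 * ?X - F ?\<theta> ^ 2) \<le> M" using step1[of ?\<theta>] by (simp add: norm_minus_commute)
    moreover have "cmod (F ?\<theta> ^ 2) = a^2" by (simp add: a_def norm_power)
    ultimately show ?thesis by (simp add: norm_mult)
  qed
  have hj: "2*a^2 - (real n)^2 \<le> real n * b"
  proof -
    have "2 * (cmod (\<Sum>v\<in>V. cis (f v * (pi / real N))))^2 - (real (card V))^2
           \<le> real (card V) * cmod (\<Sum>v\<in>V. cis (2 * (f v * (pi / real N))))"
      by (rule jensen_cis[OF finV])
    moreover have "(\<Sum>v\<in>V. cis (2 * (f v * (pi / real N)))) = F (2 * pi / real N)"
      unfolding F_def by (simp add: algebra_simps)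
    ultimately show ?thesis using cardV by (simp add: a_def b_def F_def)
  qed
  show ?thesis
    by (rule exI[of _ a], rule exI[of _ b]) (use ha hb hj in \<open>simp add: a_def b_def M_def N_def m_def\<close>)
qed

lemma upper_arith:
  fixes a b n m :: real
  assumes a0: "a \<ge> 0" and b0: "b \<ge> 0"
    and hb: "b^2 \<le> 2*b + (n^2 - 2*m)"
    and ha: "a^2 \<ge> 2*(2*(m + n)/pi - n) - (n^2 - 2*m)"
    and hj: "2*a^2 - n^2 \<le> n * b"
    and n100: "n \<ge> 100" and m0: "m \<ge> 0"
  shows "m \<le> (4895/10000) * n^2"
proof (rule ccontr)
  assume "\<not> m \<le> (4895/10000) * n^2"
  then have mbig: "m > (4895/10000) * n^2" by simp
  have pi_le: "pi \<le> (31416/10000)" using pi_approx(2) by simp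
  have "4 * m / (31416/10000) \<le> 4 * m / pi"
    using pi_le m0 by (intro divide_left_mono) auto
  moreover have "4 * m / pi \<le> 4 * (m + n) / pi"
    using n100 by (intro divide_right_mono) auto
  moreover have "4 * m / (31416/10000) \<ge> (12732/10000) * m" using m0 by simp
  ultimately have h1: "4 * (m + n) / pi \<ge> (12732/10000) * m" by linarith
  have "2*(2*(m + n)/pi - n) = 4 * (m + n) / pi - 2 * n" by simp
  then have A: "a^2 \<ge> (32732/10000) * m - n^2 - 2*n" using ha h1 by linarith
  have nn: "n^2 = n * n" by (simp add: power2_eq_square)
  have "n^2 \<ge> 0" by simp
  then have nb: "n * b > (20446/100000) * n^2 - 4*n" using A hj mbig by linarith
  have "n * ((20446/100000) * n - 4) = (20446/100000) * n^2 - 4*n"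
    by (simp add: algebra_simps power2_eq_square)
  with nb have "n * b > n * ((20446/100000) * n - 4)" by simp
  then have bb: "b > (20446/100000) * n - 4" using n100 by (simp add: mult_less_cancel_left_pos)
  define c where "c = (20446/100000) * n - 5"
  have c0: "c \<ge> 0" using n100 by (simp add: c_def)
  have "(b - 1)^2 > c^2" using bb c0 by (intro power_strict_mono) (auto simp: c_def)
  then have "b^2 - 2*b + 1 > c^2" by (simp add: power2_eq_square algebra_simps)
  moreover have "c^2 = (418038916/10000000000) * n^2 - (20446/10000) * n + 25" by (simp add: c_def power2_eq_square algebra_simps)
  moreover have "n^2 \<ge> 100 * n" using n100 nn by (simp add: mult_right_mono)
  ultimately show False using hb mbig n100 by linarith
qed



lemma reg1:
  fixes P w :: nat
  assumes P1: "P \<ge> 1" and lo: "P*P - P \<le> w" and hi: "w < 3*P*P + P"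
  shows "\<exists>i<2*P. \<exists>j<2*P. i*P + j*(P+1) = w"
proof -
  define Q where "Q = w div P"
  define r where "r = w mod P"
  have wQ: "w = Q*P + r" by (simp add: Q_def r_def)
  have rP: "r < P" using P1 by (simp add: r_def)
  have "(P - 1) * P \<le> w" using lo by (simp add: algebra_simps diff_mult_distrib)
  then have "(P - 1) * P div P \<le> w div P" by (rule div_le_mono)
  then have Qlo: "P - 1 \<le> Q" unfolding Q_def using P1 by simp
  have "w < (3*P + 1) * P" using hi by (simp add: algebra_simps)
  then have Qhi: "Q < 3*P + 1" unfolding Q_def using P1 by (simp add: div_less_iff_less_mult)
  show ?thesis
  proof (cases "Q < 2*P + r")
    case True
    have rQ: "r \<le> Q" using Qlo rP by linarith
    then obtain i0 where "Q = r + i0" using le_iff_add by blast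
    then have i: "Q = i0 + r" by simp
    define i where "i = i0"
    have i: "Q = i + r" using i by (simp add: i_def)
    have "i < 2*P" using True i by linarith
    moreover have "r < 2*P" using rP by linarith
    moreover have "i*P + r*(P+1) = w" using wQ i by (simp add: algebra_simps)
    ultimately show ?thesis by blast
  next
    case False
    then have "r + 1 + P \<le> Q" using P1 by linarith
    then obtain i0 where "Q = (r + 1 + P) + i0" using le_iff_add by blast
    then have i: "Q = i0 + r + 1 + P" by simp
    define i where "i = i0"
    have i: "Q = i + r + 1 + P" using i by (simp add: i_def)
    have "i < 2*P" using Qhi i rP by linarith
    moreover have "r + P < 2*P" using rP by linarith
    moreover have "i*P + (r+P)*(P+1) = w" using wQ i by (simp add: algebra_simps)
    ultimately show ?thesis by blast
  qed
qed

lemma reg2: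
  fixes P w :: nat
  assumes P1: "P \<ge> 1" and hi: "w < 3*(2*P*P+1)"
  shows "\<exists>k<3. \<exists>c\<le>P. \<exists>i<2*P. k*(2*P*P+1) + c + i*P = w"
proof -
  define L where "L = 2*P*P+1"
  define k where "k = w div L"
  define w' where "w' = w mod L"
  have Lpos: "L > 0" by (simp add: L_def)
  have wk: "w = k*L + w'" by (simp add: k_def w'_def)
  have k3: "k < 3" using hi Lpos by (simp add: k_def L_def div_less_iff_less_mult)
  have w'L: "w' < L" using Lpos by (simp add: w'_def)
  show ?thesis
  proof (cases "w' < 2*P*P")
    case True
    define i where "i = w' div P"
    define c where "c = w' mod P"
    have w'ic: "w' = i*P + c" by (simp add: i_def c_def)
    have "c < P" using P1 by (simp add: c_def)
    then have cP: "c \<le> P" by simp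
    have iP: "i < 2*P" using True P1 by (simp add: i_def div_less_iff_less_mult mult.assoc)
    have eq: "k*(2*P*P+1) + c + i*P = w" using wk w'ic by (simp add: L_def)
    show ?thesis using k3 cP iP eq by blast
  next
    case False
    then have w'eq: "w' = 2*P*P" using w'L by (simp add: L_def)
    have "(2*P - 1)*P + P = 2*P*P" using P1 by (simp add: algebra_simps diff_mult_distrib)
    then have eq: "k*(2*P*P+1) + P + (2*P - 1)*P = w" using wk w'eq by (simp add: L_def)
    have iP: "2*P - 1 < 2*P" using P1 by simp
    show ?thesis using k3 iP eq by blast
  qed
qed

lemma reg3:
  fixes P w :: nat
  assumes P1: "P \<ge> 1" and hi: "w < 2*(2*P*P+1) + 2*P*(P+1)"
  shows "\<exists>k<3. \<exists>c\<le>P. \<exists>j<2*P. k*(2*P*P+1) + c + j*(P+1) = w"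
proof -
  define L where "L = 2*P*P+1"
  have Lle: "L \<le> 2*P*(P+1)" using P1 by (simp add: L_def algebra_simps)
  obtain k w' where kw: "w = k*L + w'" and k3: "k < 3" and w'b: "w' < 2*P*(P+1)"
  proof (cases "w < 2*L")
    case True
    have "w div L < 2" using True by (simp add: L_def div_less_iff_less_mult)
    moreover have "w mod L < L" by (simp add: L_def)
    moreover have "w = (w div L)*L + w mod L" by simp
    ultimately show ?thesis using Lle by (intro that[of "w div L" "w mod L"]) auto
  next
    case False
    then obtain w' where "w = 2*L + w'" using le_iff_add by (metis not_less)
    moreover have "w' < 2*P*(P+1)" using hi calculation by (simp add: L_def)
    ultimately show ?thesis by (intro that[of 2 w']) auto
  qed
  define j where "j = w' div (P+1)"
  define c where "c = w' mod (P+1)"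
  have w'jc: "w' = j*(P+1) + c" unfolding j_def c_def by (rule div_mult_mod_eq[symmetric])
  have cP: "c \<le> P" by (simp add: c_def less_Suc_eq_le)
  have jP: "j < 2*P" using w'b by (simp add: j_def div_less_iff_less_mult mult.assoc)
  have eq: "k*(2*P*P+1) + c + j*(P+1) = w" using kw w'jc by (simp add: L_def)
  show ?thesis using k3 cP jP eq by blast
qed

definition LL :: "nat \<Rightarrow> nat" where "LL P = 2*(P*P) + 1"
definition dd :: "nat \<Rightarrow> nat" where "dd P = 6*(P*P) + 3"
definition aa :: "nat \<Rightarrow> nat" where "aa P = 9*(P*P) + P + 3"
definition AV :: "nat \<Rightarrow> nat set" where "AV P = (\<lambda>i. i*P + 1) ` {..<2*P}"
definition AD :: "nat \<Rightarrow> nat set" where "AD P = (\<lambda>j. dd P + j*(P+1) + 1) ` {..<2*P}"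
definition AK :: "nat \<Rightarrow> nat set" where
  "AK P = (\<lambda>kc. aa P + fst kc * LL P + snd kc + 1) ` ({..<3} \<times> {..P})"
definition A0 :: "nat \<Rightarrow> nat set" where "A0 P = AV P \<union> AD P \<union> AK P"
definition N0 :: "nat \<Rightarrow> nat" where "N0 P = 14*(P*P) + 4*P + 5"
definition s0 :: "nat \<Rightarrow> nat" where "s0 P = 21*(P*P) + 3*P + 10"

lemma finite_A0: "finite (A0 P)"
  by (simp add: A0_def AV_def AD_def AK_def)

lemma card_A0: "card (A0 P) \<le> 7*P + 3"
proof -
  have "card (AV P) \<le> 2*P" unfolding AV_def using card_image_le[of "{..<2*P}"] by simp
  moreover have "card (AD P) \<le> 2*P" unfolding AD_def using card_image_le[of "{..<2*P}"] by simp
  moreover have "card (AK P) \<le> 3*(P+1)"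
  proof -
    have "card (AK P) \<le> card ({..<3::nat} \<times> {..P})" unfolding AK_def by (rule card_image_le) simp
    also have "\<dots> = 3*(P+1)" by (simp add: card_cartesian_product)
    finally show ?thesis .
  qed
  moreover have "card (A0 P) \<le> card (AV P) + card (AD P) + card (AK P)"
    unfolding A0_def by (meson card_Un_le add_le_mono1 order_trans)
  moreover have "3*(P+1) = 3*P + 3" by simp
  ultimately show ?thesis by linarith
qed

lemma iP_bound: "i < 2*(P::nat) \<Longrightarrow> i*P + P \<le> 2*(P*P)"
proof -
  assume "i < 2*P"
  then have "i + 1 \<le> 2*P" by simp
  then have "(i+1)*P \<le> (2*P)*P" by (rule mult_le_mono1)
  then show ?thesis by (simp add: algebra_simps)
qed

lemma jP_bound: "j < 2*(P::nat) \<Longrightarrow> j*(P+1) + (P+1) \<le> 2*(P*P) + 2*P"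
proof -
  assume "j < 2*P"
  then have "j + 1 \<le> 2*P" by simp
  then have "(j+1)*(P+1) \<le> (2*P)*(P+1)" by (rule mult_le_mono1)
  then show ?thesis by (simp add: algebra_simps)
qed

lemma kL_bound: "k < (3::nat) \<Longrightarrow> k * LL P \<le> 2*(2*(P*P)+1)"
proof -
  assume "k < 3"
  then have "k \<le> 2" by simp
  then have "k * LL P \<le> 2 * LL P" by (rule mult_le_mono1)
  then show ?thesis by (simp add: LL_def)
qed

lemma A0_sub:
  assumes P1: "P \<ge> 1"
  shows "A0 P \<subseteq> {1..N0 P}"
proof
  fix x assume "x \<in> A0 P"
  then consider (V) i where "i < 2*P" "x = i*P + 1"
    | (D) j where "j < 2*P" "x = dd P + j*(P+1) + 1"
    | (K) k c where "k < 3" "c \<le> P" "x = aa P + k * LL P + c + 1"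
    unfolding A0_def AV_def AD_def AK_def by auto
  then show "x \<in> {1..N0 P}"
  proof cases
    case V
    have "i*P + P \<le> 2*(P*P)" using V(1) by (rule iP_bound)
    then show ?thesis using V(2) unfolding N0_def by simp
  next
    case D
    have "j*(P+1) + (P+1) \<le> 2*(P*P) + 2*P" using D(1) by (rule jP_bound)
    then show ?thesis using D(2) unfolding N0_def dd_def by simp
  next
    case K
    have "k * LL P \<le> 2*(2*(P*P)+1)" using K(1) by (rule kL_bound)
    moreover have "P \<le> P*P" using P1 by simp
    ultimately show ?thesis using K(2,3) P1 unfolding N0_def aa_def by simp
  qed
qed

lemma A0_cover:
  assumes P1: "P \<ge> 1" and b: "b \<in> {1..N0 P}"
  shows "\<exists>x\<in>A0 P. \<exists>y\<in>A0 P. x \<noteq> y \<and> x + y + b = s0 P"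
proof -
  have bN: "1 \<le> b" "b \<le> N0 P" using b by auto
  have PP: "P \<le> P*P" using P1 by simp
  have "b + 2 \<le> s0 P" using bN PP unfolding N0_def s0_def by linarith
  define z where "z = s0 P - (b + 2)"
  have zb: "z + 2 + b = s0 P" using \<open>b + 2 \<le> s0 P\<close> unfolding z_def by simp
  have zlo: "z + P \<ge> 7*(P*P) + 3" using zb bN unfolding s0_def N0_def by linarith
  have zhi: "z \<le> 21*(P*P) + 3*P + 7" using zb bN unfolding s0_def by linarith
  consider (R1) "z < aa P" | (R2) "aa P \<le> z" "z < aa P + 3 * LL P" | (R3) "aa P + 3 * LL P \<le> z"
    by linarith
  then show ?thesis
  proof cases
    case R1
    define w where "w = z - dd P"
    have wz: "z = w + dd P" using zlo PP unfolding w_def dd_def by linarith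
    have w1: "P*P - P \<le> w" using zlo wz PP unfolding dd_def by linarith
    have w2: "w < 3*P*P + P" using R1 wz unfolding dd_def aa_def by simp
    obtain i j where ij: "i < 2*P" "j < 2*P" "i*P + j*(P+1) = w" using reg1[OF P1 w1 w2] by blast
    define x where "x = i*P + 1"
    define y where "y = dd P + j*(P+1) + 1"
    have xA: "x \<in> A0 P" using ij unfolding A0_def AV_def x_def by blast
    have yA: "y \<in> A0 P" using ij unfolding A0_def AD_def y_def by blast
    have "i*P + P \<le> 2*(P*P)" using ij(1) by (rule iP_bound)
    then have "x < y" unfolding x_def y_def dd_def by linarith
    moreover have "x + y + b = s0 P" using ij(3) wz zb unfolding x_def y_def by linarith
    ultimately have "x \<noteq> y" "x + y + b = s0 P" by simp_all
    then show ?thesis using xA yA by blast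
  next
    case R2
    define w where "w = z - aa P"
    have wz: "z = w + aa P" using R2 unfolding w_def by linarith
    have w2: "w < 3*(2*P*P+1)" using R2 wz unfolding LL_def by simp
    obtain k c i where kci: "k < 3" "c \<le> P" "i < 2*P" "k*(2*P*P+1) + c + i*P = w"
      using reg2[OF P1 w2] by blast
    have kLL: "k * LL P = k*(2*P*P+1)" unfolding LL_def by (simp add: mult.assoc)
    define x where "x = i*P + 1"
    define y where "y = aa P + k * LL P + c + 1"
    have xA: "x \<in> A0 P" using kci unfolding A0_def AV_def x_def by blast
    have "y \<in> AK P" unfolding AK_def y_def by (rule image_eqI[where x="(k,c)"]) (use kci in auto)
    then have yA: "y \<in> A0 P" unfolding A0_def by blast
    have "i*P + P \<le> 2*(P*P)" using kci(3) by (rule iP_bound)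
    then have "x < y" unfolding x_def y_def aa_def by linarith
    moreover have "x + y + b = s0 P" using kci(4) wz zb kLL unfolding x_def y_def by linarith
    ultimately have "x \<noteq> y" "x + y + b = s0 P" by simp_all
    then show ?thesis using xA yA by blast
  next
    case R3
    define w where "w = z - aa P - dd P"
    have LLdd: "3 * LL P = dd P" unfolding LL_def dd_def by simp
    have wz: "z = w + aa P + dd P" using R3 LLdd unfolding w_def by linarith
    have w2: "w < 2*(2*P*P+1) + 2*P*(P+1)"
    proof -
      have "w \<le> 6*(P*P) + 2*P + 1" using wz zhi unfolding aa_def dd_def by linarith
      moreover have "2*(2*P*P+1) + 2*P*(P+1) = 6*(P*P) + 2*P + 2" by (simp add: algebra_simps)
      ultimately show ?thesis by linarith
    qed
    obtain k c j where kcj: "k < 3" "c \<le> P" "j < 2*P" "k*(2*P*P+1) + c + j*(P+1) = w"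
      using reg3[OF P1 w2] by blast
    have kLL: "k * LL P = k*(2*P*P+1)" unfolding LL_def by (simp add: mult.assoc)
    define x where "x = dd P + j*(P+1) + 1"
    define y where "y = aa P + k * LL P + c + 1"
    have xA: "x \<in> A0 P" using kcj unfolding A0_def AD_def x_def by blast
    have "y \<in> AK P" unfolding AK_def y_def by (rule image_eqI[where x="(k,c)"]) (use kcj in auto)
    then have yA: "y \<in> A0 P" unfolding A0_def by blast
    have "j*(P+1) + (P+1) \<le> 2*(P*P) + 2*P" using kcj(3) by (rule jP_bound)
    then have "x < y" using PP unfolding x_def y_def aa_def dd_def by linarith
    moreover have "x + y + b = s0 P" using kcj(4) wz zb kLL unfolding x_def y_def by linarith
    ultimately have "x \<noteq> y" "x + y + b = s0 P" by simp_all
    then show ?thesis using xA yA by blast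
  qed
qed

lemma magic_from_set:
  fixes A :: "nat set" and N s n :: nat
  assumes finA: "finite A" and AN: "A \<subseteq> {1..N}" and cardA: "card A = n"
    and cover: "\<And>b. b \<in> {1..N} - A \<Longrightarrow> \<exists>x\<in>A. \<exists>y\<in>A. x \<noteq> y \<and> x + y + b = s"
  shows "\<exists>E. edge_magic {..<n} E \<and> card E = N - n"
proof -
  define V where "V = {..<n}"
  obtain h where h: "bij_betw h V A"
    using ex_bij_betw_nat_finite[OF finA] cardA by (auto simp: V_def atLeast0LessThan)
  define hi where "hi = inv_into V h"
  have hi_in: "hi x \<in> V" and h_hi: "h (hi x) = x" if "x \<in> A" for x
    using that h unfolding hi_def
    by (auto intro: bij_betw_inv_into_right inv_into_into simp: bij_betw_def)
  define B where "B = {1..N} - A"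
  define pr where "pr b = (SOME p. fst p \<in> A \<and> snd p \<in> A \<and> fst p \<noteq> snd p \<and> fst p + snd p + b = s)" for b
  have pr: "fst (pr b) \<in> A \<and> snd (pr b) \<in> A \<and> fst (pr b) \<noteq> snd (pr b) \<and> fst (pr b) + snd (pr b) + b = s"
    if bB: "b \<in> B" for b
  proof -
    obtain x y where "x \<in> A" "y \<in> A" "x \<noteq> y" "x + y + b = s" using cover[of b] bB B_def by blast
    then have "\<exists>p. fst p \<in> A \<and> snd p \<in> A \<and> fst p \<noteq> snd p \<and> fst p + snd p + b = s"
      by (intro exI[of _ "(x,y)"]) simp
    then show ?thesis unfolding pr_def by (rule someI_ex)
  qed
  define ed where "ed b = {hi (fst (pr b)), hi (snd (pr b))}" for b
  define E where "E = ed ` B"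
  have h_ed: "h ` ed b = {fst (pr b), snd (pr b)}" if "b \<in> B" for b
    using pr[OF that] h_hi unfolding ed_def by auto
  have inj_ed: "inj_on ed B"
  proof (rule inj_onI)
    fix b1 b2 assume b1: "b1 \<in> B" and b2: "b2 \<in> B" and eq: "ed b1 = ed b2"
    have "{fst (pr b1), snd (pr b1)} = {fst (pr b2), snd (pr b2)}"
      using h_ed[OF b1] h_ed[OF b2] eq by simp
    then have "fst (pr b1) + snd (pr b1) = fst (pr b2) + snd (pr b2)"
      by (auto simp: doubleton_eq_iff)
    then show "b1 = b2" using pr[OF b1] pr[OF b2] by linarith
  qed
  have finB: "finite B" by (simp add: B_def)
  have cardB: "card B = N - n"
    unfolding B_def using AN cardA finA by (simp add: card_Diff_subset)
  have cardE: "card E = N - n" unfolding E_def using card_image[OF inj_ed] cardB by simp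
  have nN: "n \<le> N" using card_mono[OF _ AN] cardA by simp
  define l where "l x = (case x of Inl v \<Rightarrow> h v | Inr e \<Rightarrow> inv_into B ed e)" for x
  have l_ed: "l (Inr (ed b)) = b" if "b \<in> B" for b
    using inv_into_f_f[OF inj_ed that] by (simp add: l_def)
  have bij1: "bij_betw l (Inl ` V) A"
  proof -
    have "inj_on l (Inl ` V)"
      using h by (auto simp: inj_on_def l_def bij_betw_def)
    moreover have "l ` Inl ` V = A" using h by (auto simp: l_def bij_betw_def image_image)
    ultimately show ?thesis by (simp add: bij_betw_def)
  qed
  have bij2: "bij_betw l (Inr ` E) B"
  proof -
    have "inj_on l (Inr ` E)"
    proof (rule inj_onI)
      fix x y assume "x \<in> Inr ` E" "y \<in> Inr ` E" "l x = l y"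
      then obtain b1 b2 where "b1 \<in> B" "b2 \<in> B" "x = Inr (ed b1)" "y = Inr (ed b2)"
        by (auto simp: E_def)
      then show "x = y" using \<open>l x = l y\<close> l_ed by simp
    qed
    moreover have "l ` Inr ` E = B"
      using l_ed by (force simp: E_def image_image)
    ultimately show ?thesis by (simp add: bij_betw_def)
  qed
  have "bij_betw l (Inl ` V \<union> Inr ` E) (A \<union> B)"
    by (rule bij_betw_combine[OF bij1 bij2]) (auto simp: B_def)
  moreover have "A \<union> B = {1..card E + card V}"
    using AN cardE nN by (auto simp: B_def V_def)
  ultimately have bij: "bij_betw l (Inl ` V \<union> Inr ` E) {1..card E + card V}" by simp
  have magic: "l (Inl a) + l (Inl c) + l (Inr {a,c}) = s" if ac: "{a,c} \<in> E" for a c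
  proof -
    obtain b where b: "b \<in> B" "{a,c} = ed b" using ac unfolding E_def by blast
    let ?x = "fst (pr b)" and ?y = "snd (pr b)"
    have "{a,c} = {hi ?x, hi ?y}" using b by (simp add: ed_def)
    then have "(a = hi ?x \<and> c = hi ?y) \<or> (a = hi ?y \<and> c = hi ?x)" by (auto simp: doubleton_eq_iff)
    then have "h a + h c = ?x + ?y" using pr[OF b(1)] h_hi by auto
    moreover have "l (Inr {a,c}) = b" using b l_ed by simp
    ultimately show ?thesis using pr[OF b(1)] by (simp add: l_def)
  qed
  have sg: "simple_graph V E"
  proof -
    have "E \<subseteq> {{a, c} | a c. a \<in> V \<and> c \<in> V \<and> a \<noteq> c}"
    proof
      fix e assume "e \<in> E"
      then obtain b where b: "b \<in> B" "e = ed b" by (auto simp: E_def)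
      let ?x = "fst (pr b)" and ?y = "snd (pr b)"
      have "hi ?x \<in> V" "hi ?y \<in> V" using pr[OF b(1)] hi_in by auto
      moreover have "hi ?x \<noteq> hi ?y" using pr[OF b(1)] h_hi by metis
      ultimately show "e \<in> {{a, c} | a c. a \<in> V \<and> c \<in> V \<and> a \<noteq> c}" using b by (auto simp: ed_def)
    qed
    then show ?thesis by (simp add: simple_graph_def V_def)
  qed
  have "edge_magic V E"
    unfolding edge_magic_def edge_magic_labelling_def using sg bij magic by blast
  then show ?thesis using cardE by (auto simp: V_def)
qed

lemma lower_n:
  assumes n10: "n \<ge> 10"
  shows "\<exists>E. edge_magic {..<n} E \<and> 2/7 * (real n)^2 - 10 * real n \<le> real (card E)"
proof -
  define P where "P = (n - 3) div 7"
  have P1: "P \<ge> 1" using n10 by (simp add: P_def)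
  have nlo: "7*P + 3 \<le> n" using n10 unfolding P_def by linarith
  have nhi: "n \<le> 7*P + 9" using n10 unfolding P_def by linarith
  define c where "c = card (A0 P)"
  have cle: "c \<le> 7*P + 3" unfolding c_def by (rule card_A0)
  define N where "N = N0 P + (n - c)"
  define A where "A = A0 P \<union> {N0 P + 1 .. N}"
  have sub0: "A0 P \<subseteq> {1..N0 P}" by (rule A0_sub[OF P1])
  have finA: "finite A" by (simp add: A_def finite_A0)
  have AN: "A \<subseteq> {1..N}" using sub0 by (auto simp: A_def N_def)
  have disj: "A0 P \<inter> {N0 P + 1 .. N} = {}" using sub0 by auto
  have cardA: "card A = n"
    unfolding A_def using card_Un_disjoint[OF finite_A0 _ disj] cle nlo
    by (simp add: c_def N_def)
  have cover: "\<exists>x\<in>A. \<exists>y\<in>A. x \<noteq> y \<and> x + y + b = s0 P" if bb: "b \<in> {1..N} - A" for b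
  proof -
    have "b \<le> N0 P" using bb by (auto simp: A_def)
    then have "b \<in> {1..N0 P}" using bb by auto
    then obtain x y where "x \<in> A0 P" "y \<in> A0 P" "x \<noteq> y" "x + y + b = s0 P"
      using A0_cover[OF P1] by blast
    then show ?thesis by (auto simp: A_def)
  qed
  obtain E where E: "edge_magic {..<n} E" "card E = N - n"
    using magic_from_set[OF finA AN cardA cover] by blast
  have cE: "card E = N0 P - c" using E(2) cle nlo by (simp add: N_def)
  have "real (card E) \<ge> 14 * real P ^ 2 - 3 * real P + 2"
  proof -
    have "N0 P - c \<ge> N0 P - (7*P + 3)" using cle by simp
    moreover have "N0 P - (7*P + 3) = 14*(P*P) + 2 - 3*P" by (simp add: N0_def)
    moreover have "3*P \<le> 14*(P*P) + 2"
    proof -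
      have "P \<le> P*P" using P1 by simp
      then show ?thesis by linarith
    qed
    ultimately have "card E + 3*P \<ge> 14*(P*P) + 2" using cE by linarith
    then have "real (card E) + 3 * real P \<ge> 14 * (real P * real P) + 2"
      by (metis of_nat_add of_nat_le_iff of_nat_mult of_nat_numeral)
    then show ?thesis by (simp add: power2_eq_square)
  qed
  moreover have "2/7 * (real n)^2 - 10 * real n \<le> 14 * real P ^ 2 - 3 * real P + 2"
  proof -
    have rn: "real n \<le> 7 * real P + 9" "7 * real P + 3 \<le> real n" using nhi nlo by linarith+
    have "(real n)^2 \<le> (7 * real P + 9)^2" using rn by (intro power_mono) auto
    also have "\<dots> = 49 * real P ^ 2 + 126 * real P + 81" by (simp add: power2_eq_square algebra_simps)
    finally have "(real n)^2 \<le> 49 * real P ^ 2 + 126 * real P + 81" .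
    then show ?thesis using rn by linarith
  qed
  ultimately show ?thesis using E(1) by (intro exI[of _ E]) auto
qed

lemma max_set_finite:
  fixes n :: nat
  shows "finite {card E | E. edge_magic {..<n} E}"
proof -
  have "{card E | E. edge_magic {..<n} E} \<subseteq> card ` Pow (Pow {..<n})"
  proof
    fix x assume "x \<in> {card E | E. edge_magic {..<n} E}"
    then obtain E where E: "x = card E" "edge_magic {..<n} E" by blast
    then have "simple_graph {..<n} E" by (simp add: edge_magic_def)
    then have "E \<subseteq> Pow {..<n}" unfolding simple_graph_def by auto
    then show "x \<in> card ` Pow (Pow {..<n})" using E(1) by blast
  qed
  moreover have "finite (card ` Pow (Pow {..<n::nat}))" by (intro finite_imageI) (simp add: finite_Pow_iff)
  ultimately show ?thesis by (rule finite_subset)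
qed

lemma max_ge: "edge_magic {..<n} E \<Longrightarrow> card E \<le> max_edge_magic n" for n :: nat
  unfolding max_edge_magic_def by (rule Max_ge[OF max_set_finite]) blast

lemma max_in:
  assumes "n \<ge> 10"
  shows "\<exists>E. edge_magic {..<n} E \<and> max_edge_magic n = card E"
proof -
  obtain E0 where "edge_magic {..<n} E0" using lower_n[OF assms] by blast
  then have ne: "{card E | E. edge_magic {..<n} E} \<noteq> {}" by blast
  have "max_edge_magic n \<in> {card E | E. edge_magic {..<n} E}"
    unfolding max_edge_magic_def by (rule Max_in[OF max_set_finite ne])
  then show ?thesis by auto
qed


lemma upper_bound_card:
  assumes em: "edge_magic {..<n} E" and n100: "n \<ge> 100"
  shows "real (card E) \<le> (4895/10000) * (real n)^2"
proof -
  obtain a b :: real where ab: "a \<ge> 0" "b \<ge> 0" "b^2 \<le> 2*b + (real n^2 - 2*real (card E))"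
     "a^2 \<ge> 2*(2*(real (card E) + real n)/pi - real n) - (real n^2 - 2*real (card E))"
     "2*a^2 - (real n)^2 \<le> real n * b"
    using upper_key[OF em] n100 by fastforce
  show ?thesis
    by (rule upper_arith[OF ab(1) ab(2) ab(3) ab(4) ab(5)]) (use n100 in auto)
qed

lemma const_bound: "(4895/10000::real) \<le> 1/2 - 2 / (2 + (1 + 2 * sqrt 2) * pi) ^ 2"
proof -
  have s2: "sqrt 2 \<ge> 141/100" by (rule real_le_rsqrt) (simp add: power2_eq_square)
  have p: "pi \<ge> 314/100" using pi_approx(1) by simp
  have "(1 + 2 * sqrt 2) * pi \<ge> (382/100) * (314/100)"
    using s2 p by (intro mult_mono) auto
  then have K: "2 + (1 + 2 * sqrt 2) * pi \<ge> 139/10" by simp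
  then have "(2 + (1 + 2 * sqrt 2) * pi) ^ 2 \<ge> (139/10)^2" by (intro power_mono) auto
  then have K2: "(2 + (1 + 2 * sqrt 2) * pi) ^ 2 \<ge> 19321/100" by (simp add: power2_eq_square)
  have "2 / (2 + (1 + 2 * sqrt 2) * pi) ^ 2 \<le> 2 / (19321/100)"
    using K2 by (intro divide_left_mono) auto
  then show ?thesis by simp
qed

theorem theorem1:
  shows "(\<exists>C::real. \<forall>\<^sub>F n in sequentially.
            real (max_edge_magic n) \<ge> 2/7 * real n ^ 2 - C * real n)
       \<and> (\<forall>\<epsilon>>0. \<forall>\<^sub>F n in sequentially.
            real (max_edge_magic n)
              \<le> (1/2 - 2 / (2 + (1 + 2 * sqrt 2) * pi) ^ 2 + \<epsilon>) * real n ^ 2)"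
proof
  show "\<exists>C::real. \<forall>\<^sub>F n in sequentially. real (max_edge_magic n) \<ge> 2/7 * real n ^ 2 - C * real n"
  proof (intro exI[of _ 10] eventually_sequentiallyI[of 10])
    fix n :: nat assume n: "n \<ge> 10"
    obtain E where E: "edge_magic {..<n} E" "2/7 * (real n)^2 - 10 * real n \<le> real (card E)"
      using lower_n[OF n] by blast
    have "card E \<le> max_edge_magic n" by (rule max_ge[OF E(1)])
    then show "real (max_edge_magic n) \<ge> 2/7 * real n ^ 2 - 10 * real n" using E(2) by linarith
  qed
next
  show "\<forall>\<epsilon>>0. \<forall>\<^sub>F n in sequentially.
            real (max_edge_magic n)
              \<le> (1/2 - 2 / (2 + (1 + 2 * sqrt 2) * pi) ^ 2 + \<epsilon>) * real n ^ 2"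
  proof (intro allI impI eventually_sequentiallyI[of 100])
    fix \<epsilon> :: real and n :: nat assume e: "\<epsilon> > 0" and n: "n \<ge> 100"
    obtain E where E: "edge_magic {..<n} E" "max_edge_magic n = card E"
      using max_in[of n] n by auto
    have "real (max_edge_magic n) \<le> (4895/10000) * (real n)^2"
      using upper_bound_card[OF E(1) n] E(2) by simp
    also have "\<dots> \<le> (1/2 - 2 / (2 + (1 + 2 * sqrt 2) * pi) ^ 2 + \<epsilon>) * real n ^ 2"
      using const_bound e by (intro mult_right_mono) auto
    finally show "real (max_edge_magic n)
              \<le> (1/2 - 2 / (2 + (1 + 2 * sqrt 2) * pi) ^ 2 + \<epsilon>) * real n ^ 2" .
  qed
qed

end
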